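(* There is a bounded open subset $B_G$ of $X_G$ (with the topology induced from $C^1$), with $\phi(t)>0$ for all $\phi\in B_G$ and $t\in[-r,0]$, such that for every $\phi\in X_G$ there exists $t(\phi)\ge 0$ with $S_G(t,\phi)\in B_G$ for all $t\ge t(\phi)$.
   Context: Constants $\beta,\mu,\gamma,a>0$. The function $g:\mathbb{R}\to(0,\infty)$ is continuously differentiable with $0<\inf g(\mathbb{R})\le \sup g(\mathbb{R})<\infty$. The function $v:\mathbb{R}\to\mathbb{R}$ is continuously differentiable with $0<v_0\le v(x)\le v_U$ for all $x$. Fix $r>a/v_0$; $C^1=C^1([-r,0],\mathbb{R})$ with norm $|\phi|_1=\max|\phi|+\max|\phi'|$. Segments: $x_t(s)=x(t+s)$, $s\in[-r,0]$. For $\phi\in C([-r,0],\mathbb{R})$ let $\delta(\phi)$ be the unique $u\in(0,r)$ with $a=\int_{-u}^0 v(\phi(s))\,ds$. Define $G:C^1\to\mathbb{R}$ by $G(\phi)=\beta e^{-\mu\delta(\phi)}\frac{v(\phi(0))}{v(\phi(-\delta(\phi)))}g(\phi(-\delta(\phi)))-\gamma\phi(0)$, and $X_G=\{\phi\in C^1:\phi'(0)=G(\phi)\}$ (a closed $C^1$-submanifold of codimension 1 of $C^1$). Each $\phi\in X_G$ determines a unique maximal continuously differentiable solution $x^\phi$ of $x'(t)=G(x_t)$ for $t>0$, $x_0=\phi$, which exists for all $t\ge 0$, and $S_G(t,\phi)=x^\phi_t$ defines the associated semiflow on $X_G$. *)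

theory Defs
  imports "HOL-Analysis.Analysis"
begin

text \<open>Elements of C^1([-r,0],R) are represented by functions real => real;
only their values on [-r,0] matter.\<close>

definition C1 :: "real \<Rightarrow> (real \<Rightarrow> real) set" where
  "C1 r = {\<phi>. \<exists>\<phi>'. continuous_on {-r..0} \<phi>' \<and>
      (\<forall>s\<in>{-r..0}. (\<phi> has_real_derivative \<phi>' s) (at s within {-r..0}))}"

definition dseg :: "real \<Rightarrow> (real \<Rightarrow> real) \<Rightarrow> real \<Rightarrow> real" where
  "dseg r \<phi> s = vector_derivative \<phi> (at s within {-r..0})"

definition norm1 :: "real \<Rightarrow> (real \<Rightarrow> real) \<Rightarrow> real" where
  "norm1 r \<phi> = (SUP s\<in>{-r..0}. \<bar>\<phi> s\<bar>) + (SUP s\<in>{-r..0}. \<bar>dseg r \<phi> s\<bar>)"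

definition seg :: "(real \<Rightarrow> real) \<Rightarrow> real \<Rightarrow> (real \<Rightarrow> real)" where
  "seg x t = (\<lambda>s. x (t + s))"

definition delay :: "(real \<Rightarrow> real) \<Rightarrow> real \<Rightarrow> real \<Rightarrow> (real \<Rightarrow> real) \<Rightarrow> real" where
  "delay v a r \<phi> = (THE u. u \<in> {0<..<r} \<and> a = integral {-u..0} (\<lambda>s. v (\<phi> s)))"

definition Gfun :: "real \<Rightarrow> real \<Rightarrow> real \<Rightarrow> real \<Rightarrow> real \<Rightarrow> (real \<Rightarrow> real) \<Rightarrow> (real \<Rightarrow> real)
    \<Rightarrow> (real \<Rightarrow> real) \<Rightarrow> real" where
  "Gfun \<beta> \<mu> \<gamma> a r g v \<phi> =
     (let d = delay v a r \<phi> in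
       \<beta> * exp (- \<mu> * d) * (v (\<phi> 0) / v (\<phi> (- d))) * g (\<phi> (- d)) - \<gamma> * \<phi> 0)"

definition XG :: "real \<Rightarrow> real \<Rightarrow> real \<Rightarrow> real \<Rightarrow> real \<Rightarrow> (real \<Rightarrow> real) \<Rightarrow> (real \<Rightarrow> real)
    \<Rightarrow> (real \<Rightarrow> real) set" where
  "XG \<beta> \<mu> \<gamma> a r g v = {\<phi> \<in> C1 r. dseg r \<phi> 0 = Gfun \<beta> \<mu> \<gamma> a r g v \<phi>}"

definition is_solution :: "real \<Rightarrow> real \<Rightarrow> real \<Rightarrow> real \<Rightarrow> real \<Rightarrow> (real \<Rightarrow> real) \<Rightarrow> (real \<Rightarrow> real)
    \<Rightarrow> (real \<Rightarrow> real) \<Rightarrow> (real \<Rightarrow> real) \<Rightarrow> bool" where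
  "is_solution \<beta> \<mu> \<gamma> a r g v \<phi> x \<longleftrightarrow>
     (\<forall>s\<in>{-r..0}. x s = \<phi> s) \<and>
     (\<exists>x'. continuous_on {-r..} x' \<and>
        (\<forall>t\<in>{-r..}. (x has_real_derivative x' t) (at t within {-r..}))) \<and>
     (\<forall>t>0. (x has_real_derivative Gfun \<beta> \<mu> \<gamma> a r g v (seg x t)) (at t))"

definition open_in_XG :: "real \<Rightarrow> (real \<Rightarrow> real) set \<Rightarrow> (real \<Rightarrow> real) set \<Rightarrow> bool" where
  "open_in_XG r X B \<longleftrightarrow> B \<subseteq> X \<and>
     (\<forall>\<phi>\<in>B. \<exists>e>0. \<forall>\<psi>\<in>X. norm1 r (\<lambda>s. \<psi> s - \<phi> s) < e \<longrightarrow> \<psi> \<in> B)"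

definition bounded1 :: "real \<Rightarrow> (real \<Rightarrow> real) set \<Rightarrow> bool" where
  "bounded1 r B \<longleftrightarrow> (\<exists>M. \<forall>\<phi>\<in>B. norm1 r \<phi> \<le> M)"

end

theory Submission
  imports Defs
begin

lemma nb: fixes r s :: real assumes "r > 0" "s \<in> {-r..0}" shows "at s within {-r..0} \<noteq> bot"
  using assms by (auto simp: trivial_limit_within)

lemma C1_facts:
  assumes r: "r > 0" and p: "\<phi> \<in> C1 r"
  obtains \<phi>' where "continuous_on {-r..0} \<phi>'" "\<forall>s\<in>{-r..0}. dseg r \<phi> s = \<phi>' s"
    "\<forall>s\<in>{-r..0}. (\<phi> has_real_derivative \<phi>' s) (at s within {-r..0})"
    "continuous_on {-r..0} \<phi>"
proof -
  from p obtain \<phi>' where c: "continuous_on {-r..0} \<phi>'"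
    and d: "\<forall>s\<in>{-r..0}. (\<phi> has_real_derivative \<phi>' s) (at s within {-r..0})"
    unfolding C1_def by blast
  have "\<forall>s\<in>{-r..0}. dseg r \<phi> s = \<phi>' s"
    using d nb[OF r] unfolding dseg_def
    by (auto intro!: vector_derivative_within simp: has_real_derivative_iff_has_vector_derivative)
  moreover have "continuous_on {-r..0} \<phi>"
    using d by (intro DERIV_continuous_on) auto
  ultimately show ?thesis using that c d by blast
qed

lemma bdd_abs:
  fixes f :: "real \<Rightarrow> real"
  assumes "continuous_on {-r..0} f"
  shows "bdd_above ((\<lambda>s. \<bar>f s\<bar>) ` {-r..0})"
proof -
  have "compact ((\<lambda>s. \<bar>f s\<bar>) ` {-r..0})"
    by (intro compact_continuous_image continuous_intros assms) auto
  then show ?thesis by (simp add: bounded_imp_bdd_above compact_imp_bounded)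
qed

lemma norm1_bounds:
  assumes r: "r > 0" and p: "\<phi> \<in> C1 r" and q: "\<psi> \<in> C1 r" and s: "s \<in> {-r..0}"
  shows "\<bar>\<psi> s - \<phi> s\<bar> \<le> norm1 r (\<lambda>s. \<psi> s - \<phi> s)"
    "\<bar>dseg r \<psi> s - dseg r \<phi> s\<bar> \<le> norm1 r (\<lambda>s. \<psi> s - \<phi> s)"
proof -
  obtain \<phi>' where p1: "continuous_on {-r..0} \<phi>'" "\<forall>s\<in>{-r..0}. dseg r \<phi> s = \<phi>' s"
    "\<forall>s\<in>{-r..0}. (\<phi> has_real_derivative \<phi>' s) (at s within {-r..0})"
    "continuous_on {-r..0} \<phi>" using C1_facts[OF r p] by blast
  obtain \<psi>' where q1: "continuous_on {-r..0} \<psi>'" "\<forall>s\<in>{-r..0}. dseg r \<psi> s = \<psi>' s"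
    "\<forall>s\<in>{-r..0}. (\<psi> has_real_derivative \<psi>' s) (at s within {-r..0})"
    "continuous_on {-r..0} \<psi>" using C1_facts[OF r q] by blast
  have dd: "dseg r (\<lambda>s. \<psi> s - \<phi> s) s = \<psi>' s - \<phi>' s" if "s \<in> {-r..0}" for s
    unfolding dseg_def
    apply (rule vector_derivative_within[OF nb[OF r that]])
    using p1(3) q1(3) that
    by (auto intro!: has_vector_derivative_diff simp: has_real_derivative_iff_has_vector_derivative)
  have c1: "continuous_on {-r..0} (\<lambda>s. \<psi> s - \<phi> s)" using p1 q1 by (intro continuous_intros)
  have c2: "continuous_on {-r..0} (\<lambda>s. \<psi>' s - \<phi>' s)" using p1 q1 by (intro continuous_intros)
  have b1: "bdd_above ((\<lambda>s. \<bar>\<psi> s - \<phi> s\<bar>) ` {-r..0})" using bdd_abs[OF c1] .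
  have b2: "bdd_above ((\<lambda>s. \<bar>dseg r (\<lambda>s. \<psi> s - \<phi> s) s\<bar>) ` {-r..0})"
  proof -
    have "(\<lambda>s. \<bar>dseg r (\<lambda>s. \<psi> s - \<phi> s) s\<bar>) ` {-r..0} = (\<lambda>s. \<bar>\<psi>' s - \<phi>' s\<bar>) ` {-r..0}"
      using dd by (intro image_cong) auto
    then show ?thesis using bdd_abs[OF c2] by simp
  qed
  have A: "\<bar>\<psi> s - \<phi> s\<bar> \<le> (SUP s\<in>{-r..0}. \<bar>\<psi> s - \<phi> s\<bar>)"
    using b1 s by (intro cSUP_upper) auto
  have B: "\<bar>dseg r (\<lambda>s. \<psi> s - \<phi> s) s\<bar> \<le> (SUP s\<in>{-r..0}. \<bar>dseg r (\<lambda>s. \<psi> s - \<phi> s) s\<bar>)"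
    using b2 s by (intro cSUP_upper) auto
  have A0: "0 \<le> (SUP s\<in>{-r..0}. \<bar>\<psi> s - \<phi> s\<bar>)" using A by linarith
  have B0: "0 \<le> (SUP s\<in>{-r..0}. \<bar>dseg r (\<lambda>s. \<psi> s - \<phi> s) s\<bar>)" using B by linarith
  show "\<bar>\<psi> s - \<phi> s\<bar> \<le> norm1 r (\<lambda>s. \<psi> s - \<phi> s)"
    unfolding norm1_def using A B0 by linarith
  have "dseg r \<psi> s - dseg r \<phi> s = dseg r (\<lambda>s. \<psi> s - \<phi> s) s" using dd[OF s] p1 q1 s by auto
  then show "\<bar>dseg r \<psi> s - dseg r \<phi> s\<bar> \<le> norm1 r (\<lambda>s. \<psi> s - \<phi> s)"
    unfolding norm1_def using A0 B by linarith
qed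

lemma delay_in:
  fixes v :: "real \<Rightarrow> real"
  assumes c: "continuous_on {-r..0} \<phi>" and vc: "continuous_on UNIV v"
    and a: "a > 0" and v0: "v0 > 0" and vb: "\<forall>x. v0 \<le> v x \<and> v x \<le> vU" and r: "r > a / v0"
  shows "delay v a r \<phi> \<in> {0<..<r}"
proof -
  define f where "f = (\<lambda>s. v (\<phi> s))"
  have rpos: "r > 0" using r a v0 by (smt (verit) divide_pos_pos)
  have fc: "continuous_on {-r..0} f" unfolding f_def
    using continuous_on_compose2[OF vc c] by auto
  have fi: "f integrable_on {-r..0}" using integrable_continuous_interval[OF fc] by simp
  have fi2: "f integrable_on {c..d}" if "-r \<le> c" "d \<le> 0" for c d
    using integrable_on_subinterval[OF fi] that by auto
  have low: "integral {c..d} f \<ge> v0 * (d - c)" if "-r \<le> c" "c \<le> d" "d \<le> 0" for c d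
  proof -
    have "integral {c..d} (\<lambda>x. v0) \<le> integral {c..d} f"
      using that vb fi2[of c d] by (intro integral_le) (auto simp: f_def)
    then show ?thesis using that by (simp add: mult.commute)
  qed
  define F where "F = (\<lambda>u. integral {-u..0} f)"
  have Fc: "continuous_on {0..r} F"
  proof -
    have "continuous_on {-r..0} (\<lambda>x. integral {x..0} f)"
      using indefinite_integral_continuous_1'[OF fi] .
    then have "continuous_on {0..r} ((\<lambda>x. integral {x..0} f) \<circ> uminus)"
      by (intro continuous_on_compose continuous_intros)
        (auto elim!: continuous_on_subset)
    then show ?thesis unfolding F_def o_def .
  qed
  have F0: "F 0 = 0" unfolding F_def by simp
  have Fr: "F r > a"
  proof -
    have "F r \<ge> v0 * r" unfolding F_def using low[of "-r" 0] rpos by simp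
    moreover have "v0 * r > a" using r v0 by (simp add: field_simps)
    ultimately show ?thesis by linarith
  qed
  obtain u where u: "0 \<le> u" "u \<le> r" "F u = a"
    using IVT'[of F 0 a r] Fc F0 Fr rpos a by force
  have u0: "u \<in> {0<..<r}" using u F0 Fr a by (cases "u = 0"; cases "u = r") auto
  have uniq: "w = u" if "w \<in> {0<..<r}" "a = integral {-w..0} f" for w
  proof (rule ccontr)
    assume ne: "w \<noteq> u"
    have mono: "F q > F p" if "0 \<le> p" "p < q" "q \<le> r" for p q
    proof -
      have "integral {-q..-p} f + integral {-p..0} f = integral {-q..0} f"
        using that fi2[of "-q" 0] by (intro Henstock_Kurzweil_Integration.integral_combine) auto
      moreover have "integral {-q..-p} f \<ge> v0 * (q - p)" using low[of "-q" "-p"] that by simp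
      moreover have "v0 * (q - p) > 0" using v0 that by simp
      ultimately show ?thesis unfolding F_def by linarith
    qed
    have "F w = a" using that unfolding F_def by simp
    show False
    proof (cases "w < u")
      case True
      then have "F u > F w" using mono[of w u] u that by auto
      then show False using \<open>F w = a\<close> u by simp
    next
      case False
      then have "u < w" using ne by simp
      then have "F w > F u" using mono[of u w] u that by auto
      then show False using \<open>F w = a\<close> u by simp
    qed
  qed
  have "\<exists>!w. w \<in> {0<..<r} \<and> a = integral {-w..0} (\<lambda>s. v (\<phi> s))"
    using u0 u uniq unfolding F_def f_def by blast
  then have "delay v a r \<phi> \<in> {0<..<r} \<and> a = integral {-(delay v a r \<phi>)..0} (\<lambda>s. v (\<phi> s))"
    unfolding delay_def by (rule theI')
  then show ?thesis by blast
qed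

lemma decr_lemma:
  fixes y y' :: "real \<Rightarrow> real"
  assumes c: "continuous_on {0..} y" and d: "\<And>t. t > 0 \<Longrightarrow> (y has_real_derivative y' t) (at t)"
    and n: "\<And>t. t > 0 \<Longrightarrow> y' t \<le> 0" and t: "t \<ge> 0"
  shows "y t \<le> y 0"
proof (cases "t = 0")
  case False
  then have tp: "t > 0" using t by simp
  have "continuous_on {0..t} y" using c by (rule continuous_on_subset) auto
  moreover have "\<And>z. 0 < z \<Longrightarrow> z < t \<Longrightarrow> y differentiable at z"
    using d real_differentiable_def by blast
  ultimately obtain l z where z: "0 < z" "z < t" "(y has_real_derivative l) (at z)" "y t - y 0 = (t - 0) * l"
    using MVT[OF tp] by blast
  have "l = y' z" using DERIV_unique[OF z(3) d[OF z(1)]] .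
  then have "l \<le> 0" using n z by simp
  then have "(t - 0) * l \<le> 0" using tp by (simp add: mult_nonneg_nonpos)
  then show ?thesis using z(4) by linarith
qed simp

lemma compare_lemma:
  fixes x h :: "real \<Rightarrow> real"
  assumes c: "continuous_on {0..} x"
    and d: "\<And>t. t > 0 \<Longrightarrow> (x has_real_derivative (h t - \<gamma> * x t)) (at t)"
    and hb: "\<And>t. t > 0 \<Longrightarrow> m1 \<le> h t \<and> h t \<le> M1"
    and g: "\<gamma> > 0" and m: "0 < m1" and t: "t \<ge> 0"
  shows "x t \<le> M1 / \<gamma> + \<bar>x 0\<bar> * exp (- \<gamma> * t)"
    "x t \<ge> m1 / \<gamma> - (\<bar>x 0\<bar> + m1 / \<gamma>) * exp (- \<gamma> * t)"
proof -
  have M: "M1 \<ge> m1" using hb[of 1] by simp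
  define y where "y = (\<lambda>t. exp (\<gamma> * t) * (x t - M1 / \<gamma>))"
  have "y t \<le> y 0"
  proof (rule decr_lemma[where y' = "\<lambda>t. exp (\<gamma> * t) * (h t - M1)"])
    show "continuous_on {0..} y" unfolding y_def using c by (intro continuous_intros)
    fix t :: real assume tp: "t > 0"
    show "(y has_real_derivative exp (\<gamma> * t) * (h t - M1)) (at t)"
      unfolding y_def
      apply (rule DERIV_cong)
       apply (rule DERIV_mult[OF DERIV_fun_exp[OF DERIV_cmult_Id] DERIV_diff[OF d[OF tp] DERIV_const]])
      using g by (simp add: field_simps)
    show "exp (\<gamma> * t) * (h t - M1) \<le> 0" using hb[OF tp] by (simp add: mult_nonneg_nonpos)
  qed (use t in auto)
  then have "exp (\<gamma> * t) * (x t - M1 / \<gamma>) \<le> x 0 - M1 / \<gamma>" unfolding y_def by simp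
  then have "x t - M1 / \<gamma> \<le> (x 0 - M1 / \<gamma>) * exp (- \<gamma> * t)"
    by (simp add: exp_minus field_simps)
  moreover have "(x 0 - M1 / \<gamma>) * exp (- \<gamma> * t) \<le> \<bar>x 0\<bar> * exp (- \<gamma> * t)"
  proof -
    have "M1 / \<gamma> \<ge> 0" using g m M by simp
    then show ?thesis by (intro mult_right_mono) auto
  qed
  ultimately show "x t \<le> M1 / \<gamma> + \<bar>x 0\<bar> * exp (- \<gamma> * t)" by linarith
  define z where "z = (\<lambda>t. - (exp (\<gamma> * t) * (x t - m1 / \<gamma>)))"
  have "z t \<le> z 0"
  proof (rule decr_lemma[where y' = "\<lambda>t. - (exp (\<gamma> * t) * (h t - m1))"])
    show "continuous_on {0..} z" unfolding z_def using c by (intro continuous_intros)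
    fix t :: real assume tp: "t > 0"
    show "(z has_real_derivative - (exp (\<gamma> * t) * (h t - m1))) (at t)"
      unfolding z_def
      apply (rule DERIV_cong)
       apply (rule DERIV_minus[OF DERIV_mult[OF DERIV_fun_exp[OF DERIV_cmult_Id] DERIV_diff[OF d[OF tp] DERIV_const]]])
      using g by (simp add: field_simps)
    show "- (exp (\<gamma> * t) * (h t - m1)) \<le> 0" using hb[OF tp] by simp
  qed (use t in auto)
  then have "exp (\<gamma> * t) * (x t - m1 / \<gamma>) \<ge> x 0 - m1 / \<gamma>" unfolding z_def by simp
  then have "x t - m1 / \<gamma> \<ge> (x 0 - m1 / \<gamma>) * exp (- \<gamma> * t)"
    by (simp add: exp_minus field_simps)
  moreover have "(x 0 - m1 / \<gamma>) * exp (- \<gamma> * t) \<ge> - (\<bar>x 0\<bar> + m1 / \<gamma>) * exp (- \<gamma> * t)"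
    using g m by (intro mult_right_mono) auto
  ultimately show "x t \<ge> m1 / \<gamma> - (\<bar>x 0\<bar> + m1 / \<gamma>) * exp (- \<gamma> * t)" by linarith
qed

lemma Gfun_bounds:
  fixes v g :: "real \<Rightarrow> real"
  assumes c: "continuous_on {-r..0} \<phi>" and vc: "continuous_on UNIV v"
    and a: "a > 0" and v0: "v0 > 0" and vb: "\<forall>x. v0 \<le> v x \<and> v x \<le> vU" and r: "r > a / v0"
    and gb: "\<forall>x. cc \<le> g x \<and> g x \<le> CC" and cc: "cc > 0" and b: "\<beta> > 0" and mu: "\<mu> > 0"
  shows "\<beta> * exp (- \<mu> * r) * (v0 / vU) * cc \<le> Gfun \<beta> \<mu> \<gamma> a r g v \<phi> + \<gamma> * \<phi> 0"
    "Gfun \<beta> \<mu> \<gamma> a r g v \<phi> + \<gamma> * \<phi> 0 \<le> \<beta> * (vU / v0) * CC"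
proof -
  define d where "d = delay v a r \<phi>"
  have d: "0 < d" "d < r" using delay_in[OF c vc a v0 vb r] unfolding d_def by auto
  define E where "E = exp (- \<mu> * d)"
  define Q where "Q = v (\<phi> 0) / v (\<phi> (- d))"
  define G where "G = g (\<phi> (- d))"
  have eq: "Gfun \<beta> \<mu> \<gamma> a r g v \<phi> + \<gamma> * \<phi> 0 = \<beta> * E * Q * G"
    unfolding Gfun_def Let_def E_def Q_def G_def d_def by simp
  have E1: "exp (- \<mu> * r) \<le> E" "E \<le> 1" "0 \<le> E" unfolding E_def using d mu by auto
  have vU: "vU \<ge> v0" using vb by (meson order_trans)
  have w1: "v0 \<le> v (\<phi> 0)" "v (\<phi> 0) \<le> vU" "v0 \<le> v (\<phi> (-d))" "v (\<phi> (-d)) \<le> vU"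
    using vb by auto
  have Q1: "v0 / vU \<le> Q" unfolding Q_def
    by (rule frac_le) (use w1 v0 in auto)
  have Q2: "Q \<le> vU / v0" unfolding Q_def
    by (rule frac_le) (use w1 v0 in auto)
  have G1: "cc \<le> G" "G \<le> CC" unfolding G_def using gb by auto
  have p1: "0 \<le> v0 / vU" using v0 vU by simp
  have Q0: "0 \<le> Q" using order_trans[OF p1 Q1] .
  have G0: "0 \<le> G" using G1 cc by simp
  have l1: "exp (- \<mu> * r) * (v0 / vU) \<le> E * Q"
    by (rule mult_mono) (use E1 Q1 Q0 p1 in auto)
  have l2: "exp (- \<mu> * r) * (v0 / vU) * cc \<le> E * Q * G"
    by (rule mult_mono[OF l1 G1(1)]) (use E1 Q0 cc in auto)
  have u1: "E * Q \<le> 1 * (vU / v0)"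
    by (rule mult_mono) (use E1 Q2 Q0 in auto)
  have u2: "E * Q * G \<le> 1 * (vU / v0) * CC"
    by (rule mult_mono[OF u1 G1(2)]) (use E1 Q0 G0 vU v0 in auto)
  have "\<beta> * (exp (- \<mu> * r) * (v0 / vU) * cc) \<le> \<beta> * (E * Q * G)"
    using l2 b by (intro mult_left_mono) auto
  then show "\<beta> * exp (- \<mu> * r) * (v0 / vU) * cc \<le> Gfun \<beta> \<mu> \<gamma> a r g v \<phi> + \<gamma> * \<phi> 0"
    unfolding eq by (simp add: mult.assoc)
  have "\<beta> * (E * Q * G) \<le> \<beta> * (1 * (vU / v0) * CC)"
    using u2 b by (intro mult_left_mono) auto
  then show "Gfun \<beta> \<mu> \<gamma> a r g v \<phi> + \<gamma> * \<phi> 0 \<le> \<beta> * (vU / v0) * CC"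
    unfolding eq by (simp add: mult.assoc)
qed

lemma seg_dseg:
  assumes r: "r > 0" and s: "s \<in> {-r..0}" and d: "(x has_real_derivative D) (at (t + s))"
  shows "dseg r (seg x t) s = D"
proof -
  have "((\<lambda>s. x (s + t)) has_real_derivative D) (at s)"
    using d DERIV_shift[of x D s t] by (simp add: add.commute)
  then have "(seg x t has_real_derivative D) (at s within {-r..0})"
    unfolding seg_def by (simp add: add.commute has_field_derivative_at_within)
  then show ?thesis unfolding dseg_def
    by (intro vector_derivative_within nb[OF r s]) (simp add: has_real_derivative_iff_has_vector_derivative)
qed

lemma seg_C1:
  assumes r: "r > 0" and t: "t \<ge> 0" and c: "continuous_on {-r..} x'"
    and d: "\<forall>\<tau>\<in>{-r..}. (x has_real_derivative x' \<tau>) (at \<tau> within {-r..})"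
  shows "seg x t \<in> C1 r"
  unfolding C1_def
proof (intro CollectI exI conjI ballI)
  show "continuous_on {-r..0} (\<lambda>s. x' (t + s))"
    by (rule continuous_on_compose2[OF c]) (use t in \<open>auto intro!: continuous_intros\<close>)
  fix s assume s: "s \<in> {-r..0}"
  have img: "(\<lambda>s. t + s) ` {-r..0} \<subseteq> {-r..}" using t by auto
  have "(x has_real_derivative x' (t + s)) (at (t + s) within ((\<lambda>s. t + s) ` {-r..0}))"
    using d s t by (intro DERIV_subset[OF _ img]) auto
  moreover have "((\<lambda>s. t + s) has_real_derivative 1) (at s within {-r..0})"
    by (auto intro!: derivative_eq_intros)
  ultimately have "(x \<circ> (\<lambda>s. t + s) has_real_derivative x' (t + s) * 1) (at s within {-r..0})"
    by (rule DERIV_image_chain)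
  then show "(seg x t has_real_derivative x' (t + s)) (at s within {-r..0})"
    unfolding seg_def o_def by simp
qed

theorem corollary3p3:
  fixes \<beta> \<mu> \<gamma> a r v0 vU :: real and g v :: "real \<Rightarrow> real"
  assumes "\<beta> > 0" "\<mu> > 0" "\<gamma> > 0" "a > 0"
    and "\<exists>g'. continuous_on UNIV g' \<and> (\<forall>x. (g has_real_derivative g' x) (at x))"
    and "\<exists>c C. 0 < c \<and> (\<forall>x. c \<le> g x \<and> g x \<le> C)"
    and "\<exists>v'. continuous_on UNIV v' \<and> (\<forall>x. (v has_real_derivative v' x) (at x))"
    and "0 < v0" "\<forall>x. v0 \<le> v x \<and> v x \<le> vU"
    and "r > a / v0"
  shows "\<exists>B. open_in_XG r (XG \<beta> \<mu> \<gamma> a r g v) B \<and> bounded1 r B \<and>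
           (\<forall>\<phi>\<in>B. \<forall>t\<in>{-r..0}. \<phi> t > 0) \<and>
           (\<forall>\<phi>\<in>XG \<beta> \<mu> \<gamma> a r g v. \<exists>T\<ge>0. \<forall>x. is_solution \<beta> \<mu> \<gamma> a r g v \<phi> x \<longrightarrow>
              (\<forall>t\<ge>T. seg x t \<in> B))"
proof -
  note b = assms(1) and mu = assms(2) and ga = assms(3) and a = assms(4)
    and v0 = assms(8) and vb = assms(9) and r = assms(10)
  obtain cc CC where cc: "0 < cc" and gb: "\<forall>x. cc \<le> g x \<and> g x \<le> CC" using assms(6) by blast
  obtain v' where "\<forall>x. (v has_real_derivative v' x) (at x)" using assms(7) by blast
  then have vc: "continuous_on UNIV v" by (intro DERIV_continuous_on) auto
  have "a / v0 > 0" using a v0 by simp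
  then have rpos: "r > 0" using r by linarith
  have vU: "vU \<ge> v0" using vb by (meson order_trans)
  define X where "X = XG \<beta> \<mu> \<gamma> a r g v"
  define m1 where "m1 = \<beta> * exp (- \<mu> * r) * (v0 / vU) * cc"
  define M1 where "M1 = \<beta> * (vU / v0) * CC"
  have m1: "m1 > 0" unfolding m1_def using b cc v0 vU by simp
  have GB: "m1 \<le> Gfun \<beta> \<mu> \<gamma> a r g v \<phi> + \<gamma> * \<phi> 0 \<and> Gfun \<beta> \<mu> \<gamma> a r g v \<phi> + \<gamma> * \<phi> 0 \<le> M1"
    if "continuous_on {-r..0} \<phi>" for \<phi>
    using Gfun_bounds[OF that vc a v0 vb r gb cc b mu] unfolding m1_def M1_def by auto
  have M1: "M1 \<ge> m1"
    using GB[of "\<lambda>_. 0"] by auto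
  define lo where "lo = m1 / (2 * \<gamma>)"
  define hi where "hi = M1 / \<gamma> + m1 / \<gamma>"
  define K where "K = M1 + \<gamma> * hi + 1"
  have lo: "lo > 0" unfolding lo_def using m1 ga by simp
  define B where "B = {\<phi> \<in> X. \<forall>s\<in>{-r..0}. lo < \<phi> s \<and> \<phi> s < hi \<and> \<bar>dseg r \<phi> s\<bar> < K}"
  have XC1: "\<phi> \<in> C1 r" if "\<phi> \<in> X" for \<phi> using that unfolding X_def XG_def by auto
  have P1: "open_in_XG r X B"
    unfolding open_in_XG_def
  proof (intro conjI ballI)
    show "B \<subseteq> X" unfolding B_def by auto
    fix \<phi> assume pB: "\<phi> \<in> B"
    then have pX: "\<phi> \<in> X" unfolding B_def by auto
    obtain \<phi>' where p1: "continuous_on {-r..0} \<phi>'" "\<forall>s\<in>{-r..0}. dseg r \<phi> s = \<phi>' s"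
      "\<forall>s\<in>{-r..0}. (\<phi> has_real_derivative \<phi>' s) (at s within {-r..0})"
      "continuous_on {-r..0} \<phi>" by (rule C1_facts[OF rpos XC1[OF pX]])
    define f where "f = (\<lambda>s. min (\<phi> s - lo) (min (hi - \<phi> s) (K - \<bar>\<phi>' s\<bar>)))"
    have fc: "continuous_on {-r..0} f" unfolding f_def using p1 by (intro continuous_intros)
    obtain s0 where s0: "s0 \<in> {-r..0}" "\<forall>s\<in>{-r..0}. f s0 \<le> f s"
      using continuous_attains_inf[OF compact_Icc _ fc] rpos by auto
    have fpos: "f s0 > 0" using pB s0(1) p1(2) unfolding B_def f_def by auto
    show "\<exists>e>0. \<forall>\<psi>\<in>X. norm1 r (\<lambda>s. \<psi> s - \<phi> s) < e \<longrightarrow> \<psi> \<in> B"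
    proof (intro exI conjI ballI impI)
      show "f s0 > 0" by (rule fpos)
      fix \<psi> assume qX: "\<psi> \<in> X" and n: "norm1 r (\<lambda>s. \<psi> s - \<phi> s) < f s0"
      show "\<psi> \<in> B" unfolding B_def
      proof (intro CollectI conjI ballI qX)
        fix s assume s: "s \<in> {-r..0}"
        have e1: "\<bar>\<psi> s - \<phi> s\<bar> < f s" "\<bar>dseg r \<psi> s - dseg r \<phi> s\<bar> < f s"
        proof -
          have "f s0 \<le> f s" using s0(2) s by blast
          then show "\<bar>\<psi> s - \<phi> s\<bar> < f s" "\<bar>dseg r \<psi> s - dseg r \<phi> s\<bar> < f s"
            using norm1_bounds[OF rpos XC1[OF pX] XC1[OF qX] s] n by linarith+
        qed
        have e2: "f s \<le> \<phi> s - lo" "f s \<le> hi - \<phi> s" "f s \<le> K - \<bar>dseg r \<phi> s\<bar>"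
          unfolding f_def using p1(2) s by auto
        show "lo < \<psi> s" "\<psi> s < hi" "\<bar>dseg r \<psi> s\<bar> < K" using e1 e2 by linarith+
      qed
    qed
  qed
  have P2: "bounded1 r B"
    unfolding bounded1_def
  proof (intro exI ballI)
    fix \<phi> assume pB: "\<phi> \<in> B"
    have ne: "{-r..0} \<noteq> {}" using rpos by simp
    have "(SUP s\<in>{-r..0}. \<bar>\<phi> s\<bar>) \<le> hi"
      using pB lo unfolding B_def by (intro cSUP_least[OF ne]) fastforce
    moreover have "(SUP s\<in>{-r..0}. \<bar>dseg r \<phi> s\<bar>) \<le> K"
      using pB unfolding B_def by (intro cSUP_least[OF ne]) (auto intro: less_imp_le)
    ultimately show "norm1 r \<phi> \<le> hi + K" unfolding norm1_def by linarith
  qed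
  have P3: "\<forall>\<phi>\<in>B. \<forall>t\<in>{-r..0}. \<phi> t > 0"
    unfolding B_def using lo by fastforce
  have P4: "\<exists>T\<ge>0. \<forall>x. is_solution \<beta> \<mu> \<gamma> a r g v \<phi> x \<longrightarrow> (\<forall>t\<ge>T. seg x t \<in> B)"
    if pX: "\<phi> \<in> X" for \<phi>
  proof -
    define A where "A = \<bar>\<phi> 0\<bar> + m1 / \<gamma>"
    have A0: "A \<ge> 0" unfolding A_def using m1 ga by simp
    define T where "T = r + 1 + 2 * A / m1"
    have q0: "2 * A / m1 \<ge> 0" using A0 m1 by simp
    have T0: "T \<ge> 0" unfolding T_def using rpos q0 by linarith
    have small: "A * exp (- \<gamma> * \<tau>) < m1 / (2 * \<gamma>)" if "\<tau> \<ge> T - r" for \<tau>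
    proof -
      have q0: "2 * A / m1 \<ge> 0" using A0 m1 by simp
      then have "\<tau> \<ge> 0" using that unfolding T_def by linarith
      then have "exp (\<gamma> * \<tau>) \<ge> 1 + \<gamma> * \<tau>"
        using ga by (intro exp_ge_add_one_self_aux) simp
      moreover have "\<gamma> * \<tau> \<ge> \<gamma> * (1 + 2 * A / m1)"
        using that ga unfolding T_def by (intro mult_left_mono) auto
      moreover have "\<gamma> * (1 + 2 * A / m1) = \<gamma> + 2 * \<gamma> * A / m1" by (simp add: field_simps)
      ultimately have E: "exp (\<gamma> * \<tau>) > 2 * \<gamma> * A / m1"
        using ga by linarith
      have "m1 * exp (\<gamma> * \<tau>) > 2 * \<gamma> * A"
        using E m1 by (simp add: field_simps)
      then have "A / exp (\<gamma> * \<tau>) < m1 / (2 * \<gamma>)"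
        using ga by (simp add: field_simps)
      then show ?thesis by (simp add: exp_minus field_simps)
    qed
    show ?thesis
    proof (rule exI[of _ T], intro conjI T0 allI impI)
      fix x t assume sol: "is_solution \<beta> \<mu> \<gamma> a r g v \<phi> x" and tT: "T \<le> t"
      from sol have x0: "\<forall>s\<in>{-r..0}. x s = \<phi> s" unfolding is_solution_def by blast
      from sol obtain x' where xc': "continuous_on {-r..} x'"
        and xd': "\<forall>\<tau>\<in>{-r..}. (x has_real_derivative x' \<tau>) (at \<tau> within {-r..})"
        unfolding is_solution_def by blast
      from sol have xd: "\<forall>\<tau>>0. (x has_real_derivative Gfun \<beta> \<mu> \<gamma> a r g v (seg x \<tau>)) (at \<tau>)"
        unfolding is_solution_def by blast
      have xc: "continuous_on {-r..} x" using xd' by (intro DERIV_continuous_on) auto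
      have segc: "continuous_on {-r..0} (seg x \<tau>)" if "\<tau> \<ge> 0" for \<tau>
        unfolding seg_def
        by (rule continuous_on_compose2[OF xc]) (use that in \<open>auto intro!: continuous_intros\<close>)
      define h where "h = (\<lambda>\<tau>. Gfun \<beta> \<mu> \<gamma> a r g v (seg x \<tau>) + \<gamma> * x \<tau>)"
      have hb: "m1 \<le> h \<tau> \<and> h \<tau> \<le> M1" if "\<tau> > 0" for \<tau>
        using GB[OF segc[of \<tau>]] that unfolding h_def by (simp add: seg_def)
      have hd: "(x has_real_derivative (h \<tau> - \<gamma> * x \<tau>)) (at \<tau>)" if "\<tau> > 0" for \<tau>
        using xd that unfolding h_def by simp
      have xc0: "continuous_on {0..} x" using xc by (rule continuous_on_subset) (use rpos in auto)
      have x00: "x 0 = \<phi> 0" using x0 rpos by auto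
      have bnd: "lo < x \<tau> \<and> x \<tau> < hi" if "\<tau> \<ge> T - r" for \<tau>
      proof -
        have tp: "\<tau> \<ge> 0" using that T0 unfolding T_def using q0 rpos by linarith
        note cl = compare_lemma[OF xc0 hd hb ga m1 tp, unfolded x00]
        have "\<bar>\<phi> 0\<bar> * exp (- \<gamma> * \<tau>) \<le> A * exp (- \<gamma> * \<tau>)"
          unfolding A_def using m1 ga by (intro mult_right_mono) auto
        moreover have "m1 / \<gamma> = m1 / (2 * \<gamma>) + m1 / (2 * \<gamma>)" by (simp add: field_simps)
        moreover have "m1 / (2 * \<gamma>) > 0" using m1 ga by simp
        ultimately show ?thesis using cl small[OF that] unfolding lo_def hi_def A_def
          by linarith
      qed
      show "seg x t \<in> B"
        unfolding B_def X_def XG_def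
      proof (intro CollectI conjI ballI)
        have tpos: "t > 0" using tT unfolding T_def using q0 rpos by linarith
        show "seg x t \<in> C1 r" using seg_C1[OF rpos _ xc' xd'] tpos by simp
        show "dseg r (seg x t) 0 = Gfun \<beta> \<mu> \<gamma> a r g v (seg x t)"
          using seg_dseg[of r 0 x "Gfun \<beta> \<mu> \<gamma> a r g v (seg x t)" t] xd tpos rpos by simp
        fix s assume s: "s \<in> {-r..0}"
        have ts: "t + s \<ge> T - r" using s tT by auto
        then have tsp: "t + s > 0" unfolding T_def using q0 rpos by linarith
        have bb: "lo < x (t + s)" "x (t + s) < hi" using bnd[OF ts] by auto
        show "lo < seg x t s" "seg x t s < hi" using bb by (auto simp: seg_def)
        have D1: "dseg r (seg x t) s = h (t + s) - \<gamma> * x (t + s)"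
          using seg_dseg[OF rpos s hd[OF tsp]] .
        have g1: "\<gamma> * x (t + s) > 0" using bb lo ga by simp
        have g2: "\<gamma> * x (t + s) < \<gamma> * hi" using mult_strict_left_mono[OF bb(2) ga] .
        have g3: "M1 > 0" using m1 M1 by linarith
        have h1: "m1 \<le> h (t + s)" "h (t + s) \<le> M1" using hb[OF tsp] by auto
        have "h (t + s) - \<gamma> * x (t + s) < K" "- K < h (t + s) - \<gamma> * x (t + s)"
          unfolding K_def using g1 g2 g3 h1 m1 by linarith+
        then show "\<bar>dseg r (seg x t) s\<bar> < K" unfolding D1 by (simp add: abs_less_iff)
      qed
    qed
  qed
  show ?thesis
    using P1 P2 P3 P4 unfolding X_def by blast
qed

end
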